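(* Let $\vec E$ be as in the context, fix $b\in\Lambda^*$, and for $J_\Lambda,J'_\Lambda\in\mathbb{R}^{\Lambda^*}$ consider the curve $J_\Lambda(s)=e^{-s}J_\Lambda+\sqrt{1-e^{-2s}}J'_\Lambda$, $s\ge0$. For almost all $(J_\Lambda,J'_\Lambda)$ with respect to the product of standard Gaussian measures, the following implication holds for every $t\ge0$: if $F_b(s)>0$ for all $0\le s\le t$, then $\sigma_b(s)=\sigma_b(0)$ for all $0\le s\le t$.
   Context: $\Lambda\subset\mathbb{Z}^d$ is a finite box, $\Lambda^*$ its set of nearest-neighbour edges. For spins $\eta$ and $e=\{x,y\}$, $\eta_e=\eta_x\eta_y$; $\mathcal S_\Lambda\subset\{-1,1\}^{\Lambda^*}$ is the set of edge configurations induced by spin configurations on $\Lambda$. $H_{\Lambda,J}(\eta)=-\sum_{e\in\Lambda^*}J_e\eta_e$. $\vec E=(E(\eta,\eta'))_{\eta,\eta'\in\mathcal S_\Lambda}$ is a family of reals with $E(\eta,\eta)=0$ and $E(\eta,\eta'')=E(\eta,\eta')+E(\eta',\eta'')$. Critical set $\mathcal C=\bigcup_{\eta\ne\eta'}\{J_\Lambda:\sum_eJ_e(\eta_e-\eta'_e)=E(\eta,\eta')\}$. For $J_\Lambda\notin\mathcal C$, $\eta\prec\eta'$ iff $E(\eta,\eta')+H_{\Lambda,J}(\eta)-H_{\Lambda,J}(\eta')<0$ (a strict total order); $\sigma(J_\Lambda)$ is the $\prec$-minimal element and $\sigma^{\pm,b}(J_\Lambda)$ the $\prec$-minimal element among $\eta$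 with $\eta_b=\pm1$. The flexibility $F_b(J_\Lambda)=\big|-\sum_{e}J_e(\sigma^{+,b}_e(J_\Lambda)-\sigma^{-,b}_e(J_\Lambda))+E(\sigma^{+,b}(J_\Lambda),\sigma^{-,b}(J_\Lambda))\big|$ on $\mathbb{R}^{\Lambda^*}\setminus\mathcal C$ extends uniquely to a continuous function on $\mathbb{R}^{\Lambda^*}$, still denoted $F_b$. Write $F_b(s)=F_b(J_\Lambda(s))$ and $\sigma(s)=\sigma(J_\Lambda(s))$ (defined when $J_\Lambda(s)\notin\mathcal C$). *)

theory Defs
  imports "HOL-Probability.Probability"
begin

type_synonym 'd site = "int ^ 'd"
type_synonym 'd edge = "'d site set"
type_synonym 'd cfg = "'d edge \<Rightarrow> real"   (* edge configurations / couplings *)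

definition box_Z :: "'d::finite site \<Rightarrow> 'd site \<Rightarrow> 'd site set" where
  "box_Z a c = {x. \<forall>i. a $ i \<le> x $ i \<and> x $ i \<le> c $ i}"

definition nn_edges :: "'d::finite site set \<Rightarrow> 'd edge set" where
  "nn_edges L = {{x, y} | x y. x \<in> L \<and> y \<in> L \<and> (\<Sum>i\<in>UNIV. \<bar>x $ i - y $ i\<bar>) = 1}"

definition edge_spin :: "'d::finite site set \<Rightarrow> ('d site \<Rightarrow> real) \<Rightarrow> 'd cfg" where
  "edge_spin L \<eta> = (\<lambda>e. if e \<in> nn_edges L then (\<Prod>x\<in>e. \<eta> x) else 0)"

definition edge_cfgs :: "'d::finite site set \<Rightarrow> 'd cfg set" where
  "edge_cfgs L = {edge_spin L \<eta> | \<eta>. \<forall>x\<in>L. \<eta> x \<in> {-1, 1}}"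

definition hamiltonian :: "'d::finite site set \<Rightarrow> 'd cfg \<Rightarrow> 'd cfg \<Rightarrow> real" where
  "hamiltonian L J \<eta> = - (\<Sum>e\<in>nn_edges L. J e * \<eta> e)"

definition critical_set :: "'d::finite site set \<Rightarrow> ('d cfg \<Rightarrow> 'd cfg \<Rightarrow> real) \<Rightarrow> 'd cfg set" where
  "critical_set L E = {J. \<exists>\<eta>\<in>edge_cfgs L. \<exists>\<eta>'\<in>edge_cfgs L. \<eta> \<noteq> \<eta>' \<and>
      (\<Sum>e\<in>nn_edges L. J e * (\<eta> e - \<eta>' e)) = E \<eta> \<eta>'}"

definition prec :: "'d::finite site set \<Rightarrow> ('d cfg \<Rightarrow> 'd cfg \<Rightarrow> real) \<Rightarrow> 'd cfg \<Rightarrow> 'd cfg \<Rightarrow> 'd cfg \<Rightarrow> bool" where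
  "prec L E J \<eta> \<eta>' \<longleftrightarrow> E \<eta> \<eta>' + hamiltonian L J \<eta> - hamiltonian L J \<eta>' < 0"

definition prec_min :: "'d::finite site set \<Rightarrow> ('d cfg \<Rightarrow> 'd cfg \<Rightarrow> real) \<Rightarrow> 'd cfg \<Rightarrow> 'd cfg set \<Rightarrow> 'd cfg" where
  "prec_min L E J A = (THE \<eta>. \<eta> \<in> A \<and> (\<forall>\<eta>'\<in>A. \<eta>' \<noteq> \<eta> \<longrightarrow> prec L E J \<eta> \<eta>'))"

definition ground :: "'d::finite site set \<Rightarrow> ('d cfg \<Rightarrow> 'd cfg \<Rightarrow> real) \<Rightarrow> 'd cfg \<Rightarrow> 'd cfg" where
  "ground L E J = prec_min L E J (edge_cfgs L)"

definition ground_pm :: "'d::finite site set \<Rightarrow> ('d cfg \<Rightarrow> 'd cfg \<Rightarrow> real) \<Rightarrow> real \<Rightarrow> 'd edge \<Rightarrow> 'd cfg \<Rightarrow> 'd cfg" where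
  "ground_pm L E s b J = prec_min L E J {\<eta> \<in> edge_cfgs L. \<eta> b = s}"

definition flex_raw :: "'d::finite site set \<Rightarrow> ('d cfg \<Rightarrow> 'd cfg \<Rightarrow> real) \<Rightarrow> 'd edge \<Rightarrow> 'd cfg \<Rightarrow> real" where
  "flex_raw L E b J = (let sp = ground_pm L E 1 b J; sm = ground_pm L E (-1) b J in
     \<bar>- (\<Sum>e\<in>nn_edges L. J e * (sp e - sm e)) + E sp sm\<bar>)"

definition flex :: "'d::finite site set \<Rightarrow> ('d cfg \<Rightarrow> 'd cfg \<Rightarrow> real) \<Rightarrow> 'd edge \<Rightarrow> 'd cfg \<Rightarrow> real" where
  "flex L E b = (THE F. continuous_on UNIV F \<and>
      (\<forall>J. J \<notin> critical_set L E \<longrightarrow> F J = flex_raw L E b J))"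

definition gauss_couplings :: "'d::finite site set \<Rightarrow> 'd cfg measure" where
  "gauss_couplings L = PiM (nn_edges L) (\<lambda>_. density lborel std_normal_density)"

definition curve :: "'d cfg \<Rightarrow> 'd cfg \<Rightarrow> real \<Rightarrow> 'd cfg" where
  "curve J J' s = (\<lambda>e. exp (- s) * J e + sqrt (1 - exp (- 2 * s)) * J' e)"

end

theory Submission
  imports Defs
begin

lemma finite_box: "finite (box_Z (a::int^'d::finite) c)"
proof -
  have "box_Z a c \<subseteq> vec_lambda ` (PiE UNIV (\<lambda>i. {a$i..c$i}))"
  proof
    fix x assume "x \<in> box_Z a c"
    then have "(\<lambda>i. x$i) \<in> PiE UNIV (\<lambda>i. {a$i..c$i})" by (auto simp: box_Z_def)
    then show "x \<in> vec_lambda ` (PiE UNIV (\<lambda>i. {a$i..c$i}))"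
      by (metis image_eqI vec_lambda_eta)
  qed
  moreover have "finite (PiE UNIV (\<lambda>i. {a$i..c$i}))" by (rule finite_PiE) auto
  ultimately show ?thesis by (meson finite_imageI finite_subset)
qed

lemma finite_nn_edges: "finite L \<Longrightarrow> finite (nn_edges L)"
  by (rule finite_subset[of _ "Pow L"]) (auto simp: nn_edges_def)

lemma prod_pm1: "(\<forall>x\<in>e. f x \<in> {-1,1::real}) \<Longrightarrow> prod f e \<in> {-1,1}"
proof (cases "finite e")
  case True
  then show "(\<forall>x\<in>e. f x \<in> {-1,1::real}) \<Longrightarrow> prod f e \<in> {-1,1}"
    by (induction e rule: finite_induct) auto
qed simp

lemma nn_edge_sub: "e \<in> nn_edges L \<Longrightarrow> e \<subseteq> L"
  by (auto simp: nn_edges_def)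

lemma cfg_vals:
  assumes "\<eta> \<in> edge_cfgs L"
  shows "e \<notin> nn_edges L \<Longrightarrow> \<eta> e = 0" "e \<in> nn_edges L \<Longrightarrow> \<eta> e \<in> {-1,1}"
proof -
  obtain s where s: "\<forall>x\<in>L. s x \<in> {-1,1}" "\<eta> = edge_spin L s" using assms by (auto simp: edge_cfgs_def)
  show "e \<notin> nn_edges L \<Longrightarrow> \<eta> e = 0" using s(2) by (simp add: edge_spin_def)
  show "e \<in> nn_edges L \<Longrightarrow> \<eta> e \<in> {-1,1}"
  proof -
    assume e: "e \<in> nn_edges L"
    have "prod s e \<in> {-1,1}" using s(1) nn_edge_sub[OF e] by (intro prod_pm1) blast
    then show ?thesis using s(2) e by (simp add: edge_spin_def)
  qed
qed

lemma finite_cfgs: assumes "finite L" shows "finite (edge_cfgs L)"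
proof (rule finite_subset)
  show "edge_cfgs L \<subseteq> {f. \<forall>x. (x \<in> nn_edges L \<longrightarrow> f x \<in> {-1,1}) \<and> (x \<notin> nn_edges L \<longrightarrow> f x = 0)}"
  proof
    fix f assume f: "f \<in> edge_cfgs L"
    show "f \<in> {f. \<forall>x. (x \<in> nn_edges L \<longrightarrow> f x \<in> {-1,1}) \<and> (x \<notin> nn_edges L \<longrightarrow> f x = 0)}"
      using cfg_vals[OF f] by blast
  qed
  show "finite {f. \<forall>x. (x \<in> nn_edges L \<longrightarrow> f x \<in> {-1,1::real}) \<and> (x \<notin> nn_edges L \<longrightarrow> f x = 0)}"
    by (rule finite_set_of_finite_funs) (auto simp: finite_nn_edges assms)
qed

lemma cfg_eq:
  assumes "\<eta> \<in> edge_cfgs L" "\<eta>' \<in> edge_cfgs L" "\<eta> \<noteq> \<eta>'"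
  shows "\<exists>e\<in>nn_edges L. \<eta> e \<noteq> \<eta>' e"
proof (rule ccontr)
  assume "\<not> ?thesis"
  then have "\<eta> e = \<eta>' e" for e using cfg_vals(1)[OF assms(1), of e] cfg_vals(1)[OF assms(2), of e] by (cases "e \<in> nn_edges L") auto
  then show False using assms(3) by auto
qed

lemma b_cfgs:
  assumes "b \<in> nn_edges L"
  shows "\<exists>\<eta>\<in>edge_cfgs L. \<eta> b = 1" "\<exists>\<eta>\<in>edge_cfgs L. \<eta> b = -1"
proof -
  obtain x y where xy: "b = {x,y}" "x \<in> L" "y \<in> L" "(\<Sum>i\<in>UNIV. \<bar>x $ i - y $ i\<bar>) = 1"
    using assms by (auto simp: nn_edges_def)
  have "x \<noteq> y" using xy(4) by auto
  have "edge_spin L (\<lambda>_. 1) \<in> edge_cfgs L" by (auto simp: edge_cfgs_def)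
  moreover have "edge_spin L (\<lambda>_. 1) b = 1" using assms by (simp add: edge_spin_def)
  ultimately show "\<exists>\<eta>\<in>edge_cfgs L. \<eta> b = 1" by blast
  have "edge_spin L (\<lambda>z. if z = x then -1 else 1) \<in> edge_cfgs L"
    unfolding edge_cfgs_def by (rule CollectI, rule exI[of _ "\<lambda>z. if z = x then -1 else 1"]) auto
  moreover have "edge_spin L (\<lambda>z. if z = x then -1 else 1) b = -1"
    using assms xy \<open>x \<noteq> y\<close> by (simp add: edge_spin_def)
  ultimately show "\<exists>\<eta>\<in>edge_cfgs L. \<eta> b = -1" by blast
qed

lemma continuous_on_Min_img:
  fixes f :: "'b \<Rightarrow> 'a::topological_space \<Rightarrow> real"
  assumes "finite A" "A \<noteq> {}" "\<And>a. a \<in> A \<Longrightarrow> continuous_on S (f a)"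
  shows "continuous_on S (\<lambda>x. Min ((\<lambda>a. f a x) ` A))"
  using assms
proof (induction A rule: finite_ne_induct)
  case (singleton x)
  then show ?case by simp
next
  case (insert a F)
  have "continuous_on S (\<lambda>x. min (f a x) (Min ((\<lambda>a. f a x) ` F)))"
    using insert by (intro continuous_on_min) auto
  moreover have "min (f a x) (Min ((\<lambda>a. f a x) ` F)) = Min ((\<lambda>a. f a x) ` insert a F)" for x
    using insert by (simp add: Min_insert)
  ultimately show ?case by simp
qed

lemma cont_coord [continuous_intros]: "continuous_on S (\<lambda>J::'a \<Rightarrow> real. J e)"
  by (rule continuous_on_subset[OF continuous_on_product_coordinates]) auto

lemma interior_finite_Union:
  assumes "finite P" "\<And>p. p \<in> P \<Longrightarrow> closed (h p) \<and> interior (h p) = {}"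
  shows "interior (\<Union>p\<in>P. h p) = {}"
  using assms
proof (induction P rule: finite_induct)
  case (insert x F)
  have "interior (h x \<union> (\<Union>p\<in>F. h p)) = interior (h x)"
    using insert by (intro interior_closed_Un_empty_interior) auto
  then show ?case using insert by simp
qed simp


locale spin_setup =
  fixes L :: "'d::finite site set" and E :: "'d cfg \<Rightarrow> 'd cfg \<Rightarrow> real" and b :: "'d edge" and \<eta>0 :: "'d cfg"
  assumes finL: "finite L"
    and Erefl: "\<forall>\<eta>\<in>edge_cfgs L. E \<eta> \<eta> = 0"
    and Ecoc: "\<forall>\<eta>\<in>edge_cfgs L. \<forall>\<eta>'\<in>edge_cfgs L. \<forall>\<eta>''\<in>edge_cfgs L.
                      E \<eta> \<eta>'' = E \<eta> \<eta>' + E \<eta>' \<eta>''"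
    and bN: "b \<in> nn_edges L"
    and eta0: "\<eta>0 \<in> edge_cfgs L"
begin

definition G :: "'d cfg \<Rightarrow> 'd cfg \<Rightarrow> real" where
  "G J \<eta> = hamiltonian L J \<eta> - E \<eta>0 \<eta>"

lemma G_diff:
  assumes "\<eta> \<in> edge_cfgs L" "\<eta>' \<in> edge_cfgs L"
  shows "G J \<eta> - G J \<eta>' = -(\<Sum>e\<in>nn_edges L. J e * (\<eta> e - \<eta>' e)) + E \<eta> \<eta>'"
proof -
  have "E \<eta>0 \<eta>' = E \<eta>0 \<eta> + E \<eta> \<eta>'" using Ecoc eta0 assms by blast
  then show ?thesis by (simp add: G_def hamiltonian_def right_diff_distrib sum_subtractf)
qed

lemma prec_G:
  assumes "\<eta> \<in> edge_cfgs L" "\<eta>' \<in> edge_cfgs L"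
  shows "prec L E J \<eta> \<eta>' \<longleftrightarrow> G J \<eta> < G J \<eta>'"
proof -
  have "E \<eta>0 \<eta>' = E \<eta>0 \<eta> + E \<eta> \<eta>'" using Ecoc eta0 assms by blast
  then show ?thesis unfolding G_def prec_def by linarith
qed

lemma G_inj:
  assumes "J \<notin> critical_set L E" "\<eta> \<in> edge_cfgs L" "\<eta>' \<in> edge_cfgs L" "\<eta> \<noteq> \<eta>'"
  shows "G J \<eta> \<noteq> G J \<eta>'"
proof -
  have "(\<Sum>e\<in>nn_edges L. J e * (\<eta> e - \<eta>' e)) \<noteq> E \<eta> \<eta>'"
    using assms unfolding critical_set_def by blast
  then show ?thesis using G_diff[OF assms(2,3), of J] by auto
qed

lemma prec_min_char:
  assumes J: "J \<notin> critical_set L E" and A: "A \<subseteq> edge_cfgs L" "A \<noteq> {}"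
  shows "prec_min L E J A \<in> A \<and> G J (prec_min L E J A) = Min (G J ` A)"
proof -
  have fin: "finite A" using finite_cfgs[OF finL] A finite_subset by blast
  have "Min (G J ` A) \<in> G J ` A" using fin A by (intro Min_in) auto
  then obtain m where m: "m \<in> A" "G J m = Min (G J ` A)" by auto
  have mle: "\<forall>\<eta>\<in>A. G J m \<le> G J \<eta>" using m fin by auto
  have mprop: "\<forall>\<eta>'\<in>A. \<eta>' \<noteq> m \<longrightarrow> prec L E J m \<eta>'"
  proof (intro ballI impI)
    fix \<eta>' assume "\<eta>' \<in> A" "\<eta>' \<noteq> m"
    then show "prec L E J m \<eta>'"
      using prec_G[of m \<eta>' J] G_inj[OF J, of m \<eta>'] mle m A by (auto simp: less_le)
  qed
  have "prec_min L E J A = m" unfolding prec_min_def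
  proof (rule the_equality)
    show "m \<in> A \<and> (\<forall>\<eta>'\<in>A. \<eta>' \<noteq> m \<longrightarrow> prec L E J m \<eta>')" using m mprop by blast
  next
    fix x assume x: "x \<in> A \<and> (\<forall>\<eta>'\<in>A. \<eta>' \<noteq> x \<longrightarrow> prec L E J x \<eta>')"
    show "x = m"
    proof (rule ccontr)
      assume "x \<noteq> m"
      then have p1: "prec L E J x m" and p2: "prec L E J m x" using x mprop m by auto
      have xC: "x \<in> edge_cfgs L" and mC: "m \<in> edge_cfgs L" using x m A by auto
      have "G J x < G J m" using p1 prec_G[OF xC mC] by simp
      moreover have "G J m < G J x" using p2 prec_G[OF mC xC] by simp
      ultimately show False by linarith
    qed
  qed
  then show ?thesis using m by simp
qed

definition Ap where "Ap = {\<eta> \<in> edge_cfgs L. \<eta> b = 1}"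
definition Am where "Am = {\<eta> \<in> edge_cfgs L. \<eta> b = -1}"
definition gfun where "gfun J = Min (G J ` Ap) - Min (G J ` Am)"

lemma Ap_props: "Ap \<subseteq> edge_cfgs L" "Ap \<noteq> {}" "finite Ap"
  and Am_props: "Am \<subseteq> edge_cfgs L" "Am \<noteq> {}" "finite Am"
  using b_cfgs[OF bN] finite_cfgs[OF finL] unfolding Ap_def Am_def by auto

lemma flex_raw_eq:
  assumes J: "J \<notin> critical_set L E"
  shows "flex_raw L E b J = \<bar>gfun J\<bar>"
proof -
  have sp: "ground_pm L E 1 b J = prec_min L E J Ap" by (simp add: ground_pm_def Ap_def)
  have sm: "ground_pm L E (-1) b J = prec_min L E J Am" by (simp add: ground_pm_def Am_def)
  note cp = prec_min_char[OF J Ap_props(1,2)] and cm = prec_min_char[OF J Am_props(1,2)]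
  have "G J (prec_min L E J Ap) - G J (prec_min L E J Am) =
     -(\<Sum>e\<in>nn_edges L. J e * (prec_min L E J Ap e - prec_min L E J Am e)) + E (prec_min L E J Ap) (prec_min L E J Am)"
    using cp cm Ap_props Am_props by (intro G_diff) auto
  then show ?thesis unfolding flex_raw_def Let_def sp sm gfun_def using cp cm by simp
qed

lemma G_cont: "continuous_on S (\<lambda>J. G J \<eta>)"
  unfolding G_def hamiltonian_def by (intro continuous_intros)

lemma gfun_cont: "continuous_on S gfun"
proof -
  have "continuous_on S (\<lambda>J. Min ((\<lambda>\<eta>. G J \<eta>) ` Ap) - Min ((\<lambda>\<eta>. G J \<eta>) ` Am))"
    using Ap_props Am_props
    by (intro continuous_intros continuous_on_Min_img[where f="\<lambda>\<eta> J. G J \<eta>"] G_cont) auto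
  then show ?thesis unfolding gfun_def[abs_def] by simp
qed

lemma hyper_int:
  assumes "\<eta> \<in> edge_cfgs L" "\<eta>' \<in> edge_cfgs L" "\<eta> \<noteq> \<eta>'"
  shows "interior {J. (\<Sum>e\<in>nn_edges L. J e * (\<eta> e - \<eta>' e)) = E \<eta> \<eta>'} = {}"
    (is "interior ?H = {}")
proof (rule ccontr)
  assume "interior ?H \<noteq> {}"
  then obtain J where "J \<in> interior ?H" by auto
  then obtain U where U: "open U" "J \<in> U" "U \<subseteq> ?H" by (rule interiorE)
  obtain e where e: "e \<in> nn_edges L" "\<eta> e \<noteq> \<eta>' e" using cfg_eq[OF assms] by blast
  define p where "p t = J(e := J e + t)" for t :: real
  have pc: "continuous_on UNIV p"
  proof (rule continuous_on_coordinatewise_then_product)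
    fix i
    show "continuous_on UNIV (\<lambda>t. p t i)"
    proof (cases "i = e")
      case True
      then have eq: "(\<lambda>t. p t i) = (\<lambda>t. J e + t)" by (simp add: p_def)
      have c: "continuous_on UNIV (\<lambda>t::real. J e + t)" by (intro continuous_intros)
      show ?thesis unfolding eq by (rule c)
    next
      case False
      then have eq: "(\<lambda>t. p t i) = (\<lambda>t. J i)" by (simp add: p_def)
      show ?thesis unfolding eq by (rule continuous_on_const)
    qed
  qed
  have op: "open (p -` U)" by (rule open_vimage[OF U(1) pc])
  have "p 0 = J" by (simp add: p_def)
  then have "0 \<in> p -` U" using U(2) by simp
  then obtain \<epsilon> where \<epsilon>: "\<epsilon> > 0" "ball 0 \<epsilon> \<subseteq> p -` U" using open_contains_ball[THEN iffD1, OF op] by blast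
  define t where "t = \<epsilon> / 2"
  have "t \<in> ball 0 \<epsilon>" "t \<noteq> 0" using \<epsilon>(1) by (simp_all add: t_def dist_norm)
  then have "p t \<in> ?H" using \<epsilon> U by blast
  moreover have "(\<Sum>e'\<in>nn_edges L. p t e' * (\<eta> e' - \<eta>' e')) =
      (\<Sum>e'\<in>nn_edges L. J e' * (\<eta> e' - \<eta>' e')) + t * (\<eta> e - \<eta>' e)"
  proof -
    have "(\<Sum>e'\<in>nn_edges L. p t e' * (\<eta> e' - \<eta>' e')) =
      (\<Sum>e'\<in>nn_edges L. J e' * (\<eta> e' - \<eta>' e') + (if e' = e then t * (\<eta> e - \<eta>' e) else 0))"
    proof (rule sum.cong)
      fix e' show "p t e' * (\<eta> e' - \<eta>' e') = J e' * (\<eta> e' - \<eta>' e') + (if e' = e then t * (\<eta> e - \<eta>' e) else 0)"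
        by (cases "e' = e") (simp_all add: p_def distrib_right)
    qed simp
    also have "\<dots> = (\<Sum>e'\<in>nn_edges L. J e' * (\<eta> e' - \<eta>' e')) + t * (\<eta> e - \<eta>' e)"
      using e finite_nn_edges[OF finL] by (simp add: sum.distrib)
    finally show ?thesis .
  qed
  moreover have "J \<in> ?H" using U by blast
  ultimately have "t * (\<eta> e - \<eta>' e) = 0" by simp
  then show False using \<open>t \<noteq> 0\<close> e by simp
qed

lemma crit_interior: "interior (critical_set L E) = {}"
proof -
  define P where "P = {(\<eta>, \<eta>'). \<eta> \<in> edge_cfgs L \<and> \<eta>' \<in> edge_cfgs L \<and> \<eta> \<noteq> \<eta>'}"
  define h where "h p = {J. (\<Sum>e\<in>nn_edges L. J e * (fst p e - snd p e)) = E (fst p) (snd p)}" for p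
  have "critical_set L E = (\<Union>p\<in>P. h p)"
  proof (rule set_eqI)
    fix J show "J \<in> critical_set L E \<longleftrightarrow> J \<in> (\<Union>p\<in>P. h p)"
    proof
      assume "J \<in> critical_set L E"
      then obtain \<eta> \<eta>' where "\<eta> \<in> edge_cfgs L" "\<eta>' \<in> edge_cfgs L" "\<eta> \<noteq> \<eta>'"
        "(\<Sum>e\<in>nn_edges L. J e * (\<eta> e - \<eta>' e)) = E \<eta> \<eta>'" by (auto simp: critical_set_def)
      then have "(\<eta>, \<eta>') \<in> P" "J \<in> h (\<eta>, \<eta>')" by (auto simp: P_def h_def)
      then show "J \<in> (\<Union>p\<in>P. h p)" by blast
    next
      assume "J \<in> (\<Union>p\<in>P. h p)"
      then obtain p where "p \<in> P" "J \<in> h p" by blast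
      then show "J \<in> critical_set L E" by (cases p) (auto simp: P_def h_def critical_set_def)
    qed
  qed
  moreover have "finite P"
    using finite_cfgs[OF finL] by (intro finite_subset[of P "edge_cfgs L \<times> edge_cfgs L"]) (auto simp: P_def)
  moreover have "closed (h p) \<and> interior (h p) = {}" if "p \<in> P" for p
  proof
    show "closed (h p)" unfolding h_def by (intro closed_Collect_eq continuous_intros)
    show "interior (h p) = {}" using that hyper_int unfolding P_def h_def by auto
  qed
  ultimately show ?thesis using interior_finite_Union by metis
qed

lemma flex_eq: "flex L E b = (\<lambda>J. \<bar>gfun J\<bar>)"
  unfolding flex_def
proof (rule the_equality)
  show "continuous_on UNIV (\<lambda>J. \<bar>gfun J\<bar>) \<and> (\<forall>J. J \<notin> critical_set L E \<longrightarrow> \<bar>gfun J\<bar> = flex_raw L E b J)"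
    using flex_raw_eq gfun_cont by (auto intro: continuous_intros)
next
  fix F assume F: "continuous_on UNIV F \<and> (\<forall>J. J \<notin> critical_set L E \<longrightarrow> F J = flex_raw L E b J)"
  have cl: "closed {J. F J = \<bar>gfun J\<bar>}"
    using F gfun_cont by (intro closed_Collect_eq continuous_intros) auto
  have "- critical_set L E \<subseteq> {J. F J = \<bar>gfun J\<bar>}" using F flex_raw_eq by auto
  then have "closure (- critical_set L E) \<subseteq> {J. F J = \<bar>gfun J\<bar>}" using cl by (rule closure_minimal)
  then show "F = (\<lambda>J. \<bar>gfun J\<bar>)" by (auto simp: closure_complement crit_interior)
qed

lemma ground_b:
  assumes J: "J \<notin> critical_set L E"
  shows "ground L E J b = (if gfun J < 0 then 1 else -1)"
proof -
  have ne: "edge_cfgs L \<noteq> {}" using eta0 by auto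
  note c = prec_min_char[OF J order_refl ne]
  define \<sigma> where "\<sigma> = ground L E J"
  have s: "\<sigma> \<in> edge_cfgs L" "G J \<sigma> = Min (G J ` edge_cfgs L)" using c by (auto simp: \<sigma>_def ground_def)
  have fin: "finite (edge_cfgs L)" by (rule finite_cfgs[OF finL])
  have less: "G J \<sigma> < G J \<eta>" if "\<eta> \<in> edge_cfgs L" "\<eta> \<noteq> \<sigma>" for \<eta>
    using s that fin G_inj[OF J, of \<eta> \<sigma>] by (auto simp: less_le)
  have "\<sigma> b \<in> {-1,1}" using cfg_vals(2)[OF s(1) bN] .
  moreover have "gfun J < 0" if "\<sigma> b = 1"
  proof -
    have "Min (G J ` Am) \<in> G J ` Am" using Am_props by (intro Min_in) auto
    then obtain \<tau> where \<tau>: "\<tau> \<in> Am" "G J \<tau> = Min (G J ` Am)" by auto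
    have "\<tau> \<noteq> \<sigma>" using \<tau> that by (auto simp: Am_def)
    moreover have "\<tau> \<in> edge_cfgs L" using \<tau> Am_props by auto
    ultimately have "G J \<sigma> < G J \<tau>" using less by blast
    moreover have "\<sigma> \<in> Ap" using s(1) that by (simp add: Ap_def)
    then have "Min (G J ` Ap) \<le> G J \<sigma>" using Ap_props(3) by (intro Min_le) auto
    ultimately show ?thesis using \<tau> by (simp add: gfun_def)
  qed
  moreover have "gfun J > 0" if "\<sigma> b = -1"
  proof -
    have "Min (G J ` Ap) \<in> G J ` Ap" using Ap_props by (intro Min_in) auto
    then obtain \<tau> where \<tau>: "\<tau> \<in> Ap" "G J \<tau> = Min (G J ` Ap)" by auto
    have "\<tau> \<noteq> \<sigma>" using \<tau> that by (auto simp: Ap_def)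
    moreover have "\<tau> \<in> edge_cfgs L" using \<tau> Ap_props by auto
    ultimately have "G J \<sigma> < G J \<tau>" using less by blast
    moreover have "\<sigma> \<in> Am" using s(1) that by (simp add: Am_def)
    then have "Min (G J ` Am) \<le> G J \<sigma>" using Am_props(3) by (intro Min_le) auto
    ultimately show ?thesis using \<tau> by (simp add: gfun_def)
  qed
  ultimately show ?thesis unfolding \<sigma>_def by auto
qed

lemma curve0: "curve J J' 0 = J"
  by (simp add: curve_def)

lemma curve_cont: "continuous_on S (curve J J')"
proof (rule continuous_on_coordinatewise_then_product)
  fix e
  show "continuous_on S (\<lambda>s. curve J J' s e)"
    unfolding curve_def by (intro continuous_intros)
qed

lemma main_det:
  assumes J: "J \<notin> critical_set L E" and t: "t \<ge> 0"
    and pos: "\<forall>s\<in>{0..t}. flex L E b (curve J J' s) > 0"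
    and s: "s \<in> {0..t}" and cs: "curve J J' s \<notin> critical_set L E"
  shows "ground L E (curve J J' s) b = ground L E (curve J J' 0) b"
proof -
  define \<phi> where "\<phi> u = gfun (curve J J' u)" for u
  have cont: "continuous_on {0..s} \<phi>"
    unfolding \<phi>_def by (rule continuous_on_compose2[OF gfun_cont curve_cont]) auto
  have nz: "\<phi> u \<noteq> 0" if "u \<in> {0..s}" for u
    using pos that s by (auto simp: flex_eq \<phi>_def)
  have s0: "0 \<le> s" using s by auto
  have "(\<phi> s < 0) = (\<phi> 0 < 0)"
  proof (rule ccontr)
    assume "(\<phi> s < 0) \<noteq> (\<phi> 0 < 0)"
    then consider "\<phi> 0 \<le> 0" "0 \<le> \<phi> s" | "\<phi> s \<le> 0" "0 \<le> \<phi> 0" by linarith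
    then obtain u where "0 \<le> u" "u \<le> s" "\<phi> u = 0"
      by cases (use IVT'[OF _ _ s0 cont] IVT2'[OF _ _ s0 cont] in blast)+
    then show False using nz by auto
  qed
  then show ?thesis
    using ground_b[OF cs] ground_b[of "curve J J' 0"] J by (simp add: curve0 \<phi>_def)
qed

end

lemma M0_sf: "sigma_finite_measure (density lborel std_normal_density)"
  by (rule prob_space_imp_sigma_finite[OF prob_space_normal_density]) simp

lemma M0_singleton: "emeasure (density lborel std_normal_density) {y} = 0"
proof -
  have "{y} \<in> null_sets (density lborel std_normal_density)"
  proof (subst null_sets_density_iff)
    show "(\<lambda>x. ennreal (std_normal_density x)) \<in> borel_measurable lborel" by measurable
    show "{y} \<in> sets lborel \<and> (AE x in lborel. x \<in> {y} \<longrightarrow> ennreal (std_normal_density x) = 0)"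
    proof
      show "{y} \<in> sets lborel" by simp
      have "{y} \<in> null_sets lborel" by (simp add: null_sets_def)
      then show "AE x in lborel. x \<in> {y} \<longrightarrow> ennreal (std_normal_density x) = 0"
        by (rule AE_I') auto
    qed
  qed
  then show ?thesis by auto
qed

lemma hyper_null:
  fixes c :: "'d::finite edge \<Rightarrow> real"
  assumes e0: "e0 \<in> nn_edges L" "c e0 \<noteq> 0" and finL: "finite L"
  shows "{J \<in> space (gauss_couplings L). (\<Sum>e\<in>nn_edges L. J e * c e) = r} \<in> null_sets (gauss_couplings L)"
proof -
  define M0 where "M0 = density lborel std_normal_density"
  interpret ps: product_sigma_finite "\<lambda>_::'d edge. M0"
    unfolding product_sigma_finite_def M0_def using M0_sf by blast
  define N where "N = nn_edges L"
  have finN: "finite N" using finite_nn_edges[OF finL] by (simp add: N_def)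
  have NN: "insert e0 (N - {e0}) = N" using e0 by (auto simp: N_def)
  define H where "H = {J \<in> space (PiM N (\<lambda>_. M0)). (\<Sum>e\<in>N. J e * c e) = r}"
  have Hs: "H \<in> sets (PiM N (\<lambda>_. M0))" unfolding H_def M0_def by measurable
  have "emeasure (PiM N (\<lambda>_. M0)) H = (\<integral>\<^sup>+ J. indicator H J \<partial>PiM N (\<lambda>_. M0))"
    using Hs by simp
  also have "\<dots> = (\<integral>\<^sup>+ x. (\<integral>\<^sup>+ y. indicator H (x(e0 := y)) \<partial>M0) \<partial>PiM (N - {e0}) (\<lambda>_. M0))"
    using ps.product_nn_integral_insert[of "N - {e0}" e0 "indicator H"] finN Hs NN by simp
  also have "\<dots> = (\<integral>\<^sup>+ x. 0 \<partial>PiM (N - {e0}) (\<lambda>_. M0))"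
  proof (rule nn_integral_cong)
    fix x :: "'d edge \<Rightarrow> real"
    define y0 where "y0 = (r - (\<Sum>e\<in>N - {e0}. x e * c e)) / c e0"
    have le: "indicator H (x(e0 := y)) \<le> (indicator {y0} y :: ennreal)" for y
    proof (cases "x(e0 := y) \<in> H")
      case True
      then have "(\<Sum>e\<in>N. (x(e0 := y)) e * c e) = r" by (simp add: H_def)
      moreover have "(\<Sum>e\<in>N. (x(e0 := y)) e * c e) = y * c e0 + (\<Sum>e\<in>N - {e0}. x e * c e)"
      proof -
        have "(\<Sum>e\<in>N. (x(e0 := y)) e * c e) = (x(e0 := y)) e0 * c e0 + (\<Sum>e\<in>N - {e0}. (x(e0 := y)) e * c e)"
          using finN e0 by (simp add: N_def sum.remove)
        also have "(\<Sum>e\<in>N - {e0}. (x(e0 := y)) e * c e) = (\<Sum>e\<in>N - {e0}. x e * c e)"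
          by (rule sum.cong) auto
        finally show ?thesis by simp
      qed
      ultimately have "y = y0" using e0(2) by (simp add: y0_def field_simps)
      then show ?thesis by (simp add: indicator_def)
    qed simp
    have "(\<integral>\<^sup>+ y. indicator H (x(e0 := y)) \<partial>M0) \<le> (\<integral>\<^sup>+ y. indicator {y0} y \<partial>M0)"
      by (rule nn_integral_mono) (rule le)
    also have "\<dots> = 0" using M0_singleton by (simp add: M0_def)
    finally show "(\<integral>\<^sup>+ y. indicator H (x(e0 := y)) \<partial>M0) = 0" by simp
  qed
  also have "\<dots> = 0" by simp
  finally have "emeasure (PiM N (\<lambda>_. M0)) H = 0" .
  then show ?thesis using Hs by (simp add: null_sets_def H_def N_def M0_def gauss_couplings_def)
qed

context spin_setup begin

lemma crit_null:
  "critical_set L E \<inter> space (gauss_couplings L) \<in> null_sets (gauss_couplings L)"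
proof -
  define P where "P = {(\<eta>, \<eta>'). \<eta> \<in> edge_cfgs L \<and> \<eta>' \<in> edge_cfgs L \<and> \<eta> \<noteq> \<eta>'}"
  define h where "h p = {J \<in> space (gauss_couplings L). (\<Sum>e\<in>nn_edges L. J e * (fst p e - snd p e)) = E (fst p) (snd p)}" for p
  have eq: "critical_set L E \<inter> space (gauss_couplings L) = (\<Union>p\<in>P. h p)"
  proof (rule set_eqI)
    fix J show "J \<in> critical_set L E \<inter> space (gauss_couplings L) \<longleftrightarrow> J \<in> (\<Union>p\<in>P. h p)"
    proof
      assume "J \<in> critical_set L E \<inter> space (gauss_couplings L)"
      then obtain \<eta> \<eta>' where "\<eta> \<in> edge_cfgs L" "\<eta>' \<in> edge_cfgs L" "\<eta> \<noteq> \<eta>'"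
        "(\<Sum>e\<in>nn_edges L. J e * (\<eta> e - \<eta>' e)) = E \<eta> \<eta>'" "J \<in> space (gauss_couplings L)"
        by (auto simp: critical_set_def)
      then have "(\<eta>, \<eta>') \<in> P" "J \<in> h (\<eta>, \<eta>')" by (auto simp: P_def h_def)
      then show "J \<in> (\<Union>p\<in>P. h p)" by blast
    next
      assume "J \<in> (\<Union>p\<in>P. h p)"
      then obtain p where "p \<in> P" "J \<in> h p" by blast
      then show "J \<in> critical_set L E \<inter> space (gauss_couplings L)"
        by (cases p) (auto simp: P_def h_def critical_set_def)
    qed
  qed
  have "finite P"
    using finite_cfgs[OF finL] by (intro finite_subset[of P "edge_cfgs L \<times> edge_cfgs L"]) (auto simp: P_def)
  moreover have "h p \<in> null_sets (gauss_couplings L)" if pP: "p \<in> P" for p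
  proof -
    obtain \<eta> \<eta>' where p: "p = (\<eta>, \<eta>')" "\<eta> \<in> edge_cfgs L" "\<eta>' \<in> edge_cfgs L" "\<eta> \<noteq> \<eta>'"
      using pP by (cases p) (auto simp: P_def)
    obtain e where e: "e \<in> nn_edges L" "\<eta> e \<noteq> \<eta>' e" using cfg_eq[OF p(2-4)] by blast
    have "{J \<in> space (gauss_couplings L). (\<Sum>e\<in>nn_edges L. J e * (\<eta> e - \<eta>' e)) = E \<eta> \<eta>'}
      \<in> null_sets (gauss_couplings L)"
      by (rule hyper_null[OF e(1) _ finL]) (use e in simp)
    then show ?thesis by (simp add: h_def p(1))
  qed
  ultimately have "(\<Union>p\<in>P. h p) \<in> null_sets (gauss_couplings L)"
    by (intro null_sets_UN' countable_finite) auto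
  then show ?thesis using eq by simp
qed

end

theorem proposition2p9:
  fixes a c :: "int ^ 'd::finite"
    and E :: "'d cfg \<Rightarrow> 'd cfg \<Rightarrow> real"
    and b :: "'d edge"
  defines "L \<equiv> box_Z a c"
  assumes E_refl: "\<forall>\<eta>\<in>edge_cfgs L. E \<eta> \<eta> = 0"
    and E_cocycle: "\<forall>\<eta>\<in>edge_cfgs L. \<forall>\<eta>'\<in>edge_cfgs L. \<forall>\<eta>''\<in>edge_cfgs L.
                      E \<eta> \<eta>'' = E \<eta> \<eta>' + E \<eta>' \<eta>''"
    and b_edge: "b \<in> nn_edges L"
  shows "AE JJ in (gauss_couplings L \<Otimes>\<^sub>M gauss_couplings L).
           \<forall>t\<ge>0. (\<forall>s\<in>{0..t}. flex L E b (curve (fst JJ) (snd JJ) s) > 0) \<longrightarrow>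
             (\<forall>s\<in>{0..t}. curve (fst JJ) (snd JJ) s \<notin> critical_set L E \<longrightarrow>
                ground L E (curve (fst JJ) (snd JJ) s) b = ground L E (curve (fst JJ) (snd JJ) 0) b)"
proof -
  have finL: "finite L" unfolding L_def by (rule finite_box)
  obtain \<eta>0 where eta0: "\<eta>0 \<in> edge_cfgs L" using b_cfgs[OF b_edge] by blast
  interpret S: spin_setup L E b \<eta>0
    unfolding spin_setup_def by (intro conjI finL E_refl E_cocycle b_edge eta0)
  define GM where "GM = gauss_couplings L"
  have "prob_space GM" unfolding GM_def gauss_couplings_def
    by (rule prob_space_PiM) (simp add: prob_space_normal_density)
  then interpret GMs: sigma_finite_measure GM by (rule prob_space_imp_sigma_finite)
  have nul: "(critical_set L E \<inter> space GM) \<times> space GM \<in> null_sets (GM \<Otimes>\<^sub>M GM)"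
    using S.crit_null unfolding GM_def[symmetric] by (intro GMs.times_in_null_sets1) auto
  show ?thesis unfolding GM_def[symmetric]
  proof (rule AE_I'[OF nul], rule subsetI)
    fix JJ assume JJ: "JJ \<in> {JJ \<in> space (GM \<Otimes>\<^sub>M GM).
        \<not> (\<forall>t\<ge>0. (\<forall>s\<in>{0..t}. flex L E b (curve (fst JJ) (snd JJ) s) > 0) \<longrightarrow>
             (\<forall>s\<in>{0..t}. curve (fst JJ) (snd JJ) s \<notin> critical_set L E \<longrightarrow>
                ground L E (curve (fst JJ) (snd JJ) s) b = ground L E (curve (fst JJ) (snd JJ) 0) b))}"
    have sp: "fst JJ \<in> space GM" "snd JJ \<in> space GM" using JJ by (auto simp: space_pair_measure)
    have "fst JJ \<in> critical_set L E"
    proof (rule ccontr)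
      assume "fst JJ \<notin> critical_set L E"
      then have "\<forall>t\<ge>0. (\<forall>s\<in>{0..t}. flex L E b (curve (fst JJ) (snd JJ) s) > 0) \<longrightarrow>
             (\<forall>s\<in>{0..t}. curve (fst JJ) (snd JJ) s \<notin> critical_set L E \<longrightarrow>
                ground L E (curve (fst JJ) (snd JJ) s) b = ground L E (curve (fst JJ) (snd JJ) 0) b)"
      proof (intro allI impI ballI)
        fix t s assume t: "t \<ge> 0" and pos: "\<forall>s\<in>{0..t}. flex L E b (curve (fst JJ) (snd JJ) s) > 0"
          and s: "s \<in> {0..t}" and cs: "curve (fst JJ) (snd JJ) s \<notin> critical_set L E"
        show "ground L E (curve (fst JJ) (snd JJ) s) b = ground L E (curve (fst JJ) (snd JJ) 0) b"
          by (rule S.main_det[OF \<open>fst JJ \<notin> critical_set L E\<close> t pos s cs])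
      qed
      moreover have "\<not> (\<forall>t\<ge>0. (\<forall>s\<in>{0..t}. flex L E b (curve (fst JJ) (snd JJ) s) > 0) \<longrightarrow>
             (\<forall>s\<in>{0..t}. curve (fst JJ) (snd JJ) s \<notin> critical_set L E \<longrightarrow>
                ground L E (curve (fst JJ) (snd JJ) s) b = ground L E (curve (fst JJ) (snd JJ) 0) b))"
        using JJ unfolding mem_Collect_eq by (rule conjunct2)
      ultimately show False by contradiction
    qed
    then show "JJ \<in> (critical_set L E \<inter> space GM) \<times> space GM"
      using sp by (simp add: mem_Times_iff)
  qed
qed

end
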